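(* Fix $0<r<1$ and $\alpha=r/\sqrt{1+r^2}$, $\beta=1/\sqrt{1+r^2}$. For $n\ge2$ let $\gamma_+^{(n)}=1-r^{2/n}$ and let $\gamma_-^{(n)}$ be the unique root in $(0,\gamma_+^{(n)})$ of $f_n(\gamma)=\alpha^2+\beta^2\gamma^n-\alpha\beta(1-\gamma)^{n/2}$. Then $\Delta_n:=\gamma_+^{(n)}-\gamma_-^{(n)}$ satisfies $$\Delta_n\le\frac2n\,r^{2/n-2}\bigl(\gamma_+^{(n)}\bigr)^n,$$ and consequently, with $\tau=\ln(1/r)$, $\Delta_n=O\!\left((2\tau)^n/n^{n+1}\right)$ as $n\to\infty$.
   Context: $[\gamma_-^{(n)},\gamma_+^{(n)}]$ is the stabilizer window of the amplitude-damped state $\mathcal E_\gamma^{\otimes n}(|\psi_n\rangle\langle\psi_n|)$, $|\psi_n\rangle=\alpha|0^n\rangle+\beta|1^n\rangle$. *)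

theory Defs
  imports "HOL-Analysis.Analysis" "HOL-Library.Landau_Symbols"
begin

definition amp_alpha :: "real \<Rightarrow> real" where
  "amp_alpha r = r / sqrt (1 + r^2)"

definition amp_beta :: "real \<Rightarrow> real" where
  "amp_beta r = 1 / sqrt (1 + r^2)"

definition gamma_plus :: "real \<Rightarrow> nat \<Rightarrow> real" where
  "gamma_plus r n = 1 - r powr (2 / real n)"

definition f_amp :: "real \<Rightarrow> nat \<Rightarrow> real \<Rightarrow> real" where
  "f_amp r n g = (amp_alpha r)^2 + (amp_beta r)^2 * g ^ n
      - amp_alpha r * amp_beta r * (1 - g) powr (real n / 2)"

definition gamma_minus :: "real \<Rightarrow> nat \<Rightarrow> real" where
  "gamma_minus r n = (THE g. 0 < g \<and> g < gamma_plus r n \<and> f_amp r n g = 0)"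

definition window_width :: "real \<Rightarrow> nat \<Rightarrow> real" where
  "window_width r n = gamma_plus r n - gamma_minus r n"

end

theory Submission
  imports Defs
begin

lemma tangent_powr:
  fixes X Y p :: real
  assumes "0 < Y" "Y \<le> X" "1 \<le> p"
  shows "p * Y powr (p - 1) * (X - Y) \<le> X powr p - Y powr p"
proof (cases "Y = X")
  case True then show ?thesis by simp
next
  case False
  then have lt: "Y < X" using assms by simp
  have "\<exists>z. Y < z \<and> z < X \<and> X powr p - Y powr p = (X - Y) * (p * z powr (p - 1))"
    apply (rule MVT2[OF lt])
    using assms by (intro has_real_derivative_powr) auto
  then obtain z where z: "Y < z" "z < X" "X powr p - Y powr p = (X - Y) * (p * z powr (p - 1))"
    by blast
  have "Y powr (p - 1) \<le> z powr (p - 1)"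
    using assms z by (intro powr_mono2) auto
  then have "p * Y powr (p - 1) * (X - Y) \<le> p * z powr (p - 1) * (X - Y)"
    using assms lt by (intro mult_right_mono mult_left_mono) auto
  then show ?thesis using z by (simp add: algebra_simps)
qed

lemma f_amp_eq:
  assumes "0 < r"
  shows "f_amp r n g = (amp_beta r)^2 * (r^2 + g ^ n - r * (1 - g) powr (real n / 2))"
proof -
  have a: "amp_alpha r = r * amp_beta r" unfolding amp_alpha_def amp_beta_def by simp
  show ?thesis unfolding f_amp_def a by (simp add: algebra_simps power2_eq_square)
qed

lemma aux_inv:
  fixes K p R A m :: real
  assumes "K = p * R" "A = 1 / R" "R > 0" "p = m / 2" "m > 0"
  shows "2 / m * A = 1 / K"
proof -
  show ?thesis unfolding assms(1,2,4) using assms(3,5) by (simp add: field_simps)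
qed

lemma beta_pos: "amp_beta r > 0"
  unfolding amp_beta_def by (simp add: add_pos_nonneg)

lemma main_n:
  fixes r :: real
  assumes r0: "0 < r" and r1: "r < 1" and n2: "n \<ge> 2"
  shows "(\<exists>!g. 0 < g \<and> g < gamma_plus r n \<and> f_amp r n g = 0)
     \<and> 0 \<le> window_width r n
     \<and> window_width r n \<le> 2 / real n * r powr (2 / real n - 2) * (gamma_plus r n) ^ n"
proof -
  define p where "p = real n / 2"
  define y where "y = r powr (2 / real n)"
  define h where "h = (\<lambda>g::real. r^2 + g ^ n - r * (1 - g) powr p)"
  have p1: "1 \<le> p" unfolding p_def using n2 by simp
  have npos: "real n > 0" using n2 by simp
  have y0: "0 < y" unfolding y_def using r0 by simp
  have y1: "y < 1" unfolding y_def using r0 r1 npos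
    powr_less_mono'[of r 0 "2 / real n"] by simp
  have gp: "gamma_plus r n = 1 - y" unfolding gamma_plus_def y_def by simp
  have yp: "y powr p = r" unfolding y_def p_def using r0 npos
    by (simp add: powr_powr)
  have feq: "\<And>g. f_amp r n g = (amp_beta r)^2 * h g"
    unfolding h_def p_def using f_amp_eq[OF r0] by simp
  have fz: "\<And>g. f_amp r n g = 0 \<longleftrightarrow> h g = 0"
    using feq beta_pos by (metis mult_eq_0_iff power_not_zero less_irrefl)
  have z: "(0::real) ^ n = 0" using n2 by simp
  have rr: "r * r < r * 1" using r0 r1 by (intro mult_strict_left_mono) auto
  have h0: "h 0 < 0" unfolding h_def using rr n2
    by (simp add: power2_eq_square zero_power)
  have hgp: "h (1 - y) = (1 - y) ^ n" unfolding h_def using yp by (simp add: power2_eq_square)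
  have hgp_pos: "h (1 - y) > 0" using hgp y1 by simp
  have mono: "h g1 < h g2" if "0 \<le> g1" "g1 < g2" "g2 < 1" for g1 g2
  proof -
    have "g1 ^ n \<le> g2 ^ n" using that by (intro power_mono) auto
    moreover have "(1 - g2) powr p < (1 - g1) powr p"
      using that p1 by (intro powr_less_mono2) auto
    ultimately show ?thesis unfolding h_def using r0 by (smt (verit) mult_strict_left_mono)
  qed
  have cont: "continuous_on {0..1 - y} h"
    unfolding h_def using y0
    by (intro continuous_intros) auto
  obtain x where x: "0 \<le> x" "x \<le> 1 - y" "h x = 0"
    using IVT'[of h 0 0 "1 - y", OF less_imp_le[OF h0] less_imp_le[OF hgp_pos] _ cont] y1 by auto
  have x0: "0 < x" using x h0 by (cases "x = 0") auto
  have x1: "x < 1 - y" using x hgp_pos by (cases "x = 1 - y") auto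
  have uniq: "\<And>g. 0 < g \<and> g < 1 - y \<and> h g = 0 \<Longrightarrow> g = x"
  proof -
    fix g assume g: "0 < g \<and> g < 1 - y \<and> h g = 0"
    show "g = x"
    proof (rule ccontr)
      assume "g \<noteq> x"
      then have "g < x \<or> x < g" by auto
      then show False using mono[of g x] mono[of x g] g x x0 x1 y0 by auto
    qed
  qed
  have ex1: "\<exists>!g. 0 < g \<and> g < gamma_plus r n \<and> f_amp r n g = 0"
    unfolding gp fz
  proof (rule ex1I[of _ x])
    show "0 < x \<and> x < 1 - y \<and> h x = 0" using x0 x1 x(3) by simp
  next
    fix g assume "0 < g \<and> g < 1 - y \<and> h g = 0"
    then show "g = x" by (rule uniq)
  qed
  have gm: "gamma_minus r n = x"
    unfolding gamma_minus_def gp fz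
  proof (rule the_equality)
    show "0 < x \<and> x < 1 - y \<and> h x = 0" using x0 x1 x(3) by simp
  next
    fix g assume "0 < g \<and> g < 1 - y \<and> h g = 0"
    then show "g = x" by (rule uniq)
  qed
  have ww: "window_width r n = (1 - y) - x" unfolding window_width_def gm gp by simp
  define K where "K = r * (p * y powr (p - 1))"
  have Kpos: "K > 0" unfolding K_def using r0 p1 y0 by simp
  have tan: "p * y powr (p - 1) * ((1 - x) - y) \<le> (1 - x) powr p - y powr p"
    using tangent_powr[of y "1 - x" p] y0 x1 p1 by simp
  have "h (1 - y) - h x = ((1 - y) ^ n - x ^ n) + r * ((1 - x) powr p - y powr p)"
    unfolding h_def by (simp add: algebra_simps)
  moreover have "x ^ n \<le> (1 - y) ^ n" using x0 x1 by (intro power_mono) auto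
  ultimately have "r * ((1 - x) powr p - y powr p) \<le> (1 - y) ^ n"
    using hgp x by simp
  moreover have "K * ((1 - y) - x) \<le> r * ((1 - x) powr p - y powr p)"
  proof -
    have "K * ((1 - y) - x) = r * (p * y powr (p - 1) * ((1 - x) - y))"
      unfolding K_def by (simp add: algebra_simps)
    also have "\<dots> \<le> r * ((1 - x) powr p - y powr p)"
      using tan r0 by (intro mult_left_mono) auto
    finally show ?thesis .
  qed
  ultimately have KD: "K * ((1 - y) - x) \<le> (1 - y) ^ n" by linarith
  have "y powr (p - 1) = r powr (1 - 2 / real n)"
    unfolding y_def p_def using r0 npos by (simp add: powr_powr algebra_simps)
  then have "K = p * r powr (2 - 2 / real n)"
    unfolding K_def using r0 by (simp add: powr_add[symmetric] powr_mult_base algebra_simps)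
  moreover have "r powr (2 / real n - 2) = 1 / r powr (2 - 2 / real n)"
    by (metis minus_diff_eq powr_minus inverse_eq_divide)
  moreover have "r powr (2 - 2 / real n) > 0" using r0 by simp
  ultimately have Kinv: "2 / real n * r powr (2 / real n - 2) = 1 / K"
    using aux_inv[of K p "r powr (2 - 2 / real n)" "r powr (2 / real n - 2)" "real n"] p_def npos
    by simp
  have "(1 - y) - x \<le> (1 - y) ^ n / K" using KD Kpos by (simp add: field_simps)
  then show ?thesis using ex1 ww Kinv gp x1 by simp
qed

theorem proposition3:
  fixes r :: real
  assumes "0 < r" and "r < 1"
  shows "(\<forall>n\<ge>2. \<exists>!g. 0 < g \<and> g < gamma_plus r n \<and> f_amp r n g = 0)
    \<and> (\<forall>n\<ge>2. window_width r n
          \<le> 2 / real n * r powr (2 / real n - 2) * (gamma_plus r n) ^ n)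
    \<and> (\<lambda>n. window_width r n) \<in>
        O(\<lambda>n. (2 * ln (1 / r)) ^ n / (real n) ^ (n + 1))"
proof -
  define \<tau> where "\<tau> = ln (1 / r)"
  have tau: "\<tau> > 0" unfolding \<tau>_def using assms by simp
  have bound: "norm (window_width r n) \<le> (2 * r powr (-2)) * norm ((2 * \<tau>) ^ n / (real n) ^ (n + 1))"
    if n2: "n \<ge> 2" for n
  proof -
    have npos: "real n > 0" using n2 by simp
    note M = main_n[OF assms n2]
    have g0: "0 \<le> gamma_plus r n" unfolding gamma_plus_def using assms npos
      powr_less_mono'[of r 0 "2 / real n"] by simp
    have "r powr (2 / real n) = exp (- (2 * \<tau> / real n))"
      unfolding \<tau>_def powr_def using assms by (simp add: ln_div)
    moreover have "1 + (- (2 * \<tau> / real n)) \<le> exp (- (2 * \<tau> / real n))"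
      by (rule exp_ge_add_one_self)
    ultimately have g1: "gamma_plus r n \<le> 2 * \<tau> / real n" unfolding gamma_plus_def by simp
    have pw: "gamma_plus r n ^ n \<le> (2 * \<tau> / real n) ^ n" using g0 g1 by (intro power_mono)
    have rp: "r powr (2 / real n - 2) \<le> r powr (-2)"
      using assms npos by (intro powr_mono') auto
    have "window_width r n \<le> 2 / real n * r powr (2 / real n - 2) * (gamma_plus r n) ^ n"
      using M by blast
    also have "\<dots> \<le> 2 / real n * r powr (-2) * (2 * \<tau> / real n) ^ n"
      using rp pw npos g0 by (intro mult_mono mult_left_mono) auto
    also have "\<dots> = (2 * r powr (-2)) * ((2 * \<tau>) ^ n / (real n) ^ (n + 1))"
      using npos by (simp add: power_divide field_simps)
    finally have "window_width r n \<le> (2 * r powr (-2)) * ((2 * \<tau>) ^ n / (real n) ^ (n + 1))" .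
    moreover have "0 \<le> window_width r n" using M by blast
    moreover have "0 \<le> (2 * \<tau>) ^ n / (real n) ^ (n + 1)" using tau by simp
    ultimately show ?thesis by (simp only: real_norm_def abs_of_nonneg)
  qed
  have O: "(\<lambda>n. window_width r n) \<in> O(\<lambda>n. (2 * \<tau>) ^ n / (real n) ^ (n + 1))"
    by (rule bigoI[where c = "2 * r powr (-2)"])
       (use bound in \<open>auto intro: eventually_sequentiallyI[of 2]\<close>)
  show ?thesis using main_n[OF assms] O unfolding \<tau>_def by blast
qed

end
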